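(* Let $g(z)=z^3-z^2+7z+1$, $A=\{z\in\mathbb{C}:\Re z\le0,\ |g(z)|=1\}$ and $B=\{z\in\mathbb{C}:\Re z>0,\ |g(z)|=1\}$. Then $\Re(A)\subset[-0.275,0]$ and $\Re(B)\subset[0.495,0.64]$. Moreover, $z=0$ is the only element $z\in A$ with $\Re(z)=0$. *)

theory Defs
  imports Complex_Main
begin

definition g :: "complex \<Rightarrow> complex" where
  "g z = z^3 - z^2 + 7*z + 1"

definition A :: "complex set" where
  "A = {z. Re z \<le> 0 \<and> cmod (g z) = 1}"

definition B :: "complex set" where
  "B = {z. Re z > 0 \<and> cmod (g z) = 1}"

end

theory Submission imports Defs begin

lemma R1:
  fixes x t :: real
  assumes t: "t \<ge> 0" and x: "x < -11/40"
  and E: "(x^3-x^2+7*x+1 + (1-3*x)*t)^2 + t*(3*x^2-2*x+7-t)^2 = 1"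
  shows False
proof -
  define p where "p = x^3-x^2+7*x+1"
  define q where "q = 1-3*x"
  define c where "c = 3*x^2-2*x+7"
  define v where "v = p + q*t"
  have E': "v^2 + t*(c-t)^2 = 1" using E unfolding v_def p_def q_def c_def .
  have xx: "x*x > 121/1600" using mult_strict_mono[of "11/40" "-x" "11/40" "-x"] x by simp
  have x3: "x^3 < 0" using x xx by (simp add: power3_eq_cube mult_pos_neg)
  have x2: "x^2 = x*x" by (simp add: power2_eq_square)
  have q0: "q > 0" using x unfolding q_def by simp
  have p1: "p < -1"
  proof -
    have "x^3-x^2+7*x+2 < 0" using x xx x3 x2 by linarith
    then show ?thesis unfolding p_def by simp
  qed
  have nn: "t*(c-t)^2 \<ge> 0" using t by simp
  have v2: "v^2 \<le> 1" using E' nn by linarith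
  then have "\<bar>v\<bar> \<le> 1" by (simp add: abs_square_le_1)
  then have vle: "v \<le> 1" and vge: "-1 \<le> v" by auto
  have hid: "q*c + p = -8*x^3 + 8*x^2 - 16*x + 8"
    unfolding q_def c_def p_def by (simp add: algebra_simps power2_eq_square power3_eq_cube)
  have h7: "-8*x^3 + 8*x^2 - 16*x + 7 \<ge> 7" using x x3 xx x2 by linarith
  have qct: "q*(c-t) \<ge> -8*x^3 + 8*x^2 - 16*x + 7"
    using vle hid unfolding v_def by (simp add: algebra_simps)
  have hq: "(-8*x^3 + 8*x^2 - 16*x + 7)^2 \<ge> 2*q^3"
  proof -
    have "(-8*x^3 + 8*x^2 - 16*x + 7)^2 \<ge> 7*(-8*x^3 + 8*x^2 - 16*x + 7)"
      using mult_right_mono[OF h7, of "-8*x^3 + 8*x^2 - 16*x + 7"] h7 by (simp add: power2_eq_square)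
    moreover have "7*(-8*x^3 + 8*x^2 - 16*x + 7) - 2*q^3 = -2*x^3 + 2*x^2 - 94*x + 47"
      unfolding q_def by (simp add: algebra_simps power2_eq_square power3_eq_cube)
    moreover have "-2*x^3 + 2*x^2 - 94*x + 47 \<ge> 0" using x x3 xx x2 by linarith
    ultimately show ?thesis by linarith
  qed
  have "(q*(c-t))^2 \<ge> (-8*x^3 + 8*x^2 - 16*x + 7)^2"
    using qct h7 by (intro power_mono) auto
  with hq have "q^2*(c-t)^2 \<ge> q^2*(2*q)" by (simp add: power_mult_distrib power3_eq_cube power2_eq_square algebra_simps)
  then have ct: "(c-t)^2 \<ge> 2*q" using q0 by simp
  have "t*(c-t)^2 \<ge> t*(2*q)" using ct t by (simp add: mult_left_mono)
  moreover have "1 - v^2 < 2*q*t"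
  proof -
    have "1 - v^2 = (1-v)*(1+v)" by (simp add: algebra_simps power2_eq_square)
    also have "\<dots> \<le> 2*(1+v)" using vle vge by (intro mult_right_mono) auto
    also have "\<dots> < 2*q*t" using p1 unfolding v_def by simp
    finally show ?thesis .
  qed
  ultimately show False using E' by (simp add: mult.commute mult.left_commute)
qed

lemma mono3:
  fixes x y k :: real
  assumes "x \<le> y" "0 \<le> x" "1 \<le> k"
  shows "x^3 - x^2 + k*x \<le> y^3 - y^2 + k*y"
proof -
  have id: "y^3 - y^2 + k*y - (x^3 - x^2 + k*x) = (y - x)*((x - 1/2)^2 + (y - 1/2)^2 + x*y + k - 1/2)"
    by (simp add: algebra_simps power2_eq_square power3_eq_cube)
  have "x*y \<ge> 0" using assms by simp
  moreover have "(x - 1/2)^2 \<ge> 0" "(y - 1/2)^2 \<ge> 0" by simp_all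
  ultimately have "(x - 1/2)^2 + (y - 1/2)^2 + x*y + k - 1/2 \<ge> 0" using assms by linarith
  then have "(y - x)*((x - 1/2)^2 + (y - 1/2)^2 + x*y + k - 1/2) \<ge> 0" using assms by simp
  then show ?thesis using id by linarith
qed

lemma R2:
  fixes x t :: real
  assumes t: "t \<ge> 0" and x0: "0 < x" and x: "x < 99/200"
  and E: "(x^3-x^2+7*x+1 + (1-3*x)*t)^2 + t*(3*x^2-2*x+7-t)^2 = 1"
  shows False
proof -
  define p where "p = x^3-x^2+7*x+1"
  define q where "q = 1-3*x"
  define c where "c = 3*x^2-2*x+7"
  define v where "v = p + q*t"
  have E': "v^2 + t*(c-t)^2 = 1" using E unfolding v_def p_def q_def c_def .
  have nn: "t*(c-t)^2 \<ge> 0" using t by simp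
  have v2: "v^2 \<le> 1" using E' nn by linarith
  then have "\<bar>v\<bar> \<le> 1" by (simp add: abs_square_le_1)
  then have vle: "v \<le> 1" and vge: "-1 \<le> v" by auto
  show False
  proof (cases "x \<le> 1/3")
    case True
    then have "q \<ge> 0" unfolding q_def by simp
    moreover have "p > 1"
    proof -
      have "x^2 - x + 7 = (x - 1/2)^2 + 27/4" by (simp add: power2_eq_square algebra_simps)
      moreover have "(x - 1/2)^2 \<ge> 0" by simp
      ultimately have "x^2 - x + 7 > 0" by linarith
      then have "x*(x^2 - x + 7) > 0" using x0 by simp
      then show ?thesis unfolding p_def by (simp add: algebra_simps power2_eq_square power3_eq_cube)
    qed
    ultimately have "v > 1" unfolding v_def using t by (smt (verit) mult_nonneg_nonneg)
    then show False using vle by simp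
  next
    case False
    define m where "m = 3*x - 1"
    define h where "h = -8*x^3 + 8*x^2 - 16*x + 8"
    define s where "s = t - c"
    have m0: "m > 0" and m1: "m < 97/200" using False x unfolding m_def by auto
    have vid: "v = h - m*s" unfolding v_def h_def m_def s_def p_def q_def c_def
      by (simp add: algebra_simps power2_eq_square power3_eq_cube)
    have c0: "c \<ge> 20/3"
    proof -
      have "3*(x - 1/3)^2 \<ge> 0" by simp
      then show ?thesis unfolding c_def by (simp add: algebra_simps power2_eq_square)
    qed
    have h1: "h - 1 \<ge> 1/20"
    proof -
      have "x^3 - x^2 + 2*x \<le> (99/200)^3 - (99/200)^2 + 2*(99/200)"
        using mono3[of x "99/200" 2] x x0 by simp
      also have "\<dots> = 866262375/1000000000" by (simp add: power3_eq_cube power2_eq_square)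
      finally show ?thesis unfolding h_def by simp
    qed
    have "m*s \<ge> h - 1" using vle vid by simp
    then have "m*s > 0" using h1 by linarith
    then have s0: "s > 0" using m0 zero_less_mult_pos by blast
    have "1 - v^2 = (1-v)*(1+v)" by (simp add: algebra_simps power2_eq_square)
    also have "\<dots> \<le> (1-v)*2" using vle vge by (intro mult_left_mono) auto
    finally have A1: "1 - v^2 \<le> 2*(m*s - (h-1))" using vid by simp
    have "t*(c-t)^2 = (c+s)*s^2" unfolding s_def by (simp add: power2_eq_square algebra_simps)
    also have "\<dots> \<ge> c*s^2" using s0 by (simp add: algebra_simps)
    finally have "c*s^2 \<le> 2*(m*s - (h-1))" using A1 E' by linarith
    then have "c*(c*s^2) \<le> c*(2*(m*s - (h-1)))" using c0 by (intro mult_left_mono) auto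
    then have "(c*s - m)^2 \<le> m^2 - 2*c*(h-1)" by (simp add: power2_eq_square algebra_simps)
    moreover have "m^2 < 2*c*(h-1)"
    proof -
      have "m*m < m*(1/2)" using m0 m1 by (intro mult_strict_left_mono) auto
      then have "m^2 < 1/4" using m1 by (simp add: power2_eq_square)
      moreover have "2*c*(h-1) \<ge> 2*(20/3)*(1/20)" using c0 h1 by (intro mult_mono) auto
      ultimately show ?thesis by linarith
    qed
    moreover have "(c*s - m)^2 \<ge> 0" by simp
    ultimately show False by linarith
  qed
qed

lemma phi_mono:
  fixes a0 a b0 b M M1 w :: real
  assumes "0 \<le> a0" "a0 \<le> a" "2 \<le> b0" "b0 \<le> b" "M \<le> M1" "0 \<le> w" "w \<le> 2"
  shows "(b0-w)*(a0+w)^2 - M1*w*(2-w) \<le> (b-w)*(a+w)^2 - M*w*(2-w)"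
proof -
  have "(a0+w)^2 \<le> (a+w)^2" using assms by (intro power_mono) auto
  then have "(b0-w)*(a0+w)^2 \<le> (b-w)*(a+w)^2" using assms by (intro mult_mono) auto
  moreover have "M*(w*(2-w)) \<le> M1*(w*(2-w))" using assms by (intro mult_right_mono) auto
  ultimately show ?thesis by (simp add: mult.assoc)
qed

lemma cubic_cert:
  fixes a b M w ws :: real
  assumes "0 \<le> w" "w \<le> 2"
    and al: "b - 2*a + M - 2*ws \<ge> 2"
    and be: "a^2*b - (b - 2*a + M - 2*ws)*ws^2 > 0"
    and ga: "a^2*b - (b - 2*a + M - 2*ws)*ws^2
             + 2*((2*a*b - a^2 - 2*M) + 2*(b - 2*a + M - 2*ws)*ws + ws^2) > 0"
  shows "(b-w)*(a+w)^2 - M*w*(2-w) > 0"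
proof -
  define \<alpha> where "\<alpha> = b - 2*a + M - 2*ws"
  define \<beta> where "\<beta> = a^2*b - \<alpha>*ws^2"
  define \<gamma> where "\<gamma> = (2*a*b - a^2 - 2*M) + 2*\<alpha>*ws + ws^2"
  have id: "(b-w)*(a+w)^2 - M*w*(2-w) = (w - ws)^2*(\<alpha> - w) + (\<beta> + \<gamma>*w)"
    unfolding \<alpha>_def \<beta>_def \<gamma>_def by (simp add: algebra_simps power2_eq_square)
  have "(w - ws)^2*(\<alpha> - w) \<ge> 0" using al assms unfolding \<alpha>_def by simp
  moreover have "\<beta> + \<gamma>*w > 0"
  proof -
    have b0: "\<beta> > 0" and b2: "\<beta> + 2*\<gamma> > 0" using be ga unfolding \<alpha>_def \<beta>_def \<gamma>_def by auto
    have "\<beta> + \<gamma>*w = (1 - w/2)*\<beta> + (w/2)*(\<beta> + 2*\<gamma>)" by (simp add: algebra_simps)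
    moreover have "(1 - w/2)*\<beta> \<ge> 0" using b0 assms by simp
    moreover have "(w/2)*(\<beta> + 2*\<gamma>) \<ge> 0" using b2 assms by simp
    moreover have "(1 - w/2)*\<beta> + (w/2)*(\<beta> + 2*\<gamma>) \<noteq> 0"
    proof
      assume h: "(1 - w/2)*\<beta> + (w/2)*(\<beta> + 2*\<gamma>) = 0"
      then have "(1 - w/2)*\<beta> = 0" and "(w/2)*(\<beta> + 2*\<gamma>) = 0"
        using \<open>(1 - w/2)*\<beta> \<ge> 0\<close> \<open>(w/2)*(\<beta> + 2*\<gamma>) \<ge> 0\<close> by linarith+
      then show False using b0 b2 by auto
    qed
    ultimately show ?thesis by linarith
  qed
  ultimately show ?thesis using id by linarith
qed

lemma crude:
  fixes a b M w :: real
  assumes "0 < a" "2 \<le> b" "0 \<le> M" "M < 2*a*(b-2)" "0 \<le> w" "w \<le> 2"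
  shows "(b-w)*(a+w)^2 - M*w*(2-w) > 0"
proof (cases "w = 0")
  case True
  then show ?thesis using assms by simp
next
  case False
  then have w0: "w > 0" using assms by simp
  have "(a+w)^2 \<ge> 4*a*w"
  proof -
    have "(a+w)^2 - 4*a*w = (a-w)^2" by (simp add: power2_eq_square algebra_simps)
    then show ?thesis by (smt (verit) zero_le_power2)
  qed
  then have "(b-w)*(a+w)^2 \<ge> (b-2)*(4*a*w)" using assms by (intro mult_mono) auto
  moreover have "M*w*(2-w) \<le> M*w*2" using assms w0 by (simp add: mult_left_mono)
  moreover have "(b-2)*(4*a*w) - M*w*2 = 2*w*(2*a*(b-2) - M)" by (simp add: algebra_simps)
  moreover have "2*w*(2*a*(b-2) - M) > 0" using assms w0 by simp
  ultimately show ?thesis by linarith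
qed

lemma R3:
  fixes x t :: real
  assumes t: "t \<ge> 0" and x: "x > 16/25"
  and E: "(x^3-x^2+7*x+1 + (1-3*x)*t)^2 + t*(3*x^2-2*x+7-t)^2 = 1"
  shows False
proof -
  define p where "p = x^3-x^2+7*x+1"
  define q where "q = 1-3*x"
  define c where "c = 3*x^2-2*x+7"
  define v where "v = p + q*t"
  have E': "v^2 + t*(c-t)^2 = 1" using E unfolding v_def p_def q_def c_def .
  have nn: "t*(c-t)^2 \<ge> 0" using t by simp
  have v2: "v^2 \<le> 1" using E' nn by linarith
  then have "\<bar>v\<bar> \<le> 1" by (simp add: abs_square_le_1)
  then have vle: "v \<le> 1" and vge: "-1 \<le> v" by auto
  define a where "a = 8*x^3 - 8*x^2 + 16*x - 9"
  define b where "b = x^3 - x^2 + 7*x + 2"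
  define M where "M = (3*x-1)^3"
  define w where "w = 1 + v"
  have w0: "0 \<le> w" and w2: "w \<le> 2" using vle vge unfolding w_def by auto
  have idPhi: "(b-w)*(a+w)^2 - M*w*(2-w) = (3*x-1)^3*(v^2 + t*(c-t)^2 - 1)"
    unfolding a_def b_def M_def w_def v_def p_def q_def c_def
    by (simp add: algebra_simps power2_eq_square power3_eq_cube)
  have Phi0: "(b-w)*(a+w)^2 - M*w*(2-w) = 0" using idPhi E' by simp
  have xb: "\<And>x1 k. 0 \<le> x1 \<Longrightarrow> x1 \<le> x \<Longrightarrow> 1 \<le> k \<Longrightarrow> x1^3 - x1^2 + k*x1 \<le> x^3 - x^2 + k*x"
    by (rule mono3)
  have Mb: "\<And>x2. x \<le> x2 \<Longrightarrow> M \<le> (3*x2-1)^3"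
    unfolding M_def using x by (intro power_mono) auto
  have aL: "\<And>x1. 0 \<le> x1 \<Longrightarrow> x1 \<le> x \<Longrightarrow> 8*(x1^3 - x1^2 + 2*x1) - 9 \<le> a"
    unfolding a_def using xb[of _ 2] by fastforce
  have bL: "\<And>x1. 0 \<le> x1 \<Longrightarrow> x1 \<le> x \<Longrightarrow> (x1^3 - x1^2 + 7*x1) + 2 \<le> b"
    unfolding b_def using xb[of _ 7] by fastforce
  consider "x \<le> 6402/10000" | "6402/10000 \<le> x" "x \<le> 642/1000" | "642/1000 \<le> x" "x \<le> 68/100" | "68/100 \<le> x"
    by linarith
  then show False
  proof cases
    case 1
    have "(98946/15625 - w)*(943/15625 + w)^2 - ((3*(6402/10000)-1)^3)*w*(2-w) > 0"
      using w0 w2 by (rule cubic_cert[where ws = "28953/500000"]) (simp_all add: power2_eq_square power3_eq_cube)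
    moreover have "(98946/15625 - w)*(943/15625 + w)^2 - ((3*(6402/10000)-1)^3)*w*(2-w) \<le> (b-w)*(a+w)^2 - M*w*(2-w)"
      apply (rule phi_mono)
      using aL[of "16/25"] bL[of "16/25"] Mb[of "6402/10000"] 1 x w0 w2
      by (simp_all add: power2_eq_square power3_eq_cube)
    ultimately show False using Phi0 by simp
  next
    case 2
    have "(791741724601/125000000000 - w)*(991724601/15625000000 + w)^2 - ((3*(642/1000)-1)^3)*w*(2-w) > 0"
      using w0 w2 by (rule cubic_cert[where ws = "569759/10000000"]) (simp_all add: power2_eq_square power3_eq_cube)
    moreover have "(791741724601/125000000000 - w)*(991724601/15625000000 + w)^2 - ((3*(642/1000)-1)^3)*w*(2-w) \<le> (b-w)*(a+w)^2 - M*w*(2-w)"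
      apply (rule phi_mono)
      using aL[of "6402/10000"] bL[of "6402/10000"] Mb[of "642/1000"] 2 w0 w2
      by (simp_all add: power2_eq_square power3_eq_cube)
    ultimately show False using Phi0 by simp
  next
    case 3
    have "(793305661/125000000 - w)*(1430661/15625000 + w)^2 - ((3*(68/100)-1)^3)*w*(2-w) > 0"
      using w0 w2 by (rule cubic_cert[where ws = "763857/10000000"]) (simp_all add: power2_eq_square power3_eq_cube)
    moreover have "(793305661/125000000 - w)*(1430661/15625000 + w)^2 - ((3*(68/100)-1)^3)*w*(2-w) \<le> (b-w)*(a+w)^2 - M*w*(2-w)"
      apply (rule phi_mono)
      using aL[of "642/1000"] bL[of "642/1000"] Mb[of "68/100"] 3 w0 w2
      by (simp_all add: power2_eq_square power3_eq_cube)
    ultimately show False using Phi0 by simp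
  next
    case 4
    have a1: "a \<ge> 8*(1212032/1000000) - 9" using aL[of "68/100"] 4 by (simp add: power2_eq_square power3_eq_cube)
    have b1: "b - 2 \<ge> 4612032/1000000" using bL[of "68/100"] 4 by (simp add: power2_eq_square power3_eq_cube)
    have c3: "x^3 - x^2 + 3*x \<ge> 1892032/1000000" using xb[of "68/100" 3] 4 by (simp add: power2_eq_square power3_eq_cube)
    have Mid: "M = 27*x^3 - 27*x^2 + 9*x - 1" unfolding M_def by (simp add: algebra_simps power2_eq_square power3_eq_cube)
    define K where "K = x^3 - x^2 + 3*x"
    have "9*a - M = 45*K - 80" unfolding Mid a_def K_def by (simp add: algebra_simps)
    moreover have "K \<ge> 1892032/1000000" using c3 unfolding K_def .
    ultimately have "M < 9*a" by linarith
    also have "9*a \<le> 2*a*(b-2)" using a1 b1 by (simp add: mult_left_mono) 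
    finally have "M < 2*a*(b-2)" .
    moreover have "M \<ge> 0" unfolding M_def using x by simp
    ultimately have "(b-w)*(a+w)^2 - M*w*(2-w) > 0"
      using a1 b1 w0 w2 by (intro crude) auto
    then show False using Phi0 by simp
  qed
qed

lemma g_eq:
  fixes z :: complex
  assumes "cmod (g z) = 1"
  shows "(Re z^3-Re z^2+7*Re z+1 + (1-3*Re z)*(Im z)^2)^2 + (Im z)^2*(3*(Re z)^2-2*Re z+7-(Im z)^2)^2 = 1"
proof -
  have re: "Re (g z) = Re z^3-Re z^2+7*Re z+1 + (1-3*Re z)*(Im z)^2"
    unfolding g_def by (simp add: power2_eq_square power3_eq_cube algebra_simps)
  have im: "Im (g z) = Im z*(3*(Re z)^2-2*Re z+7-(Im z)^2)"
    unfolding g_def by (simp add: power2_eq_square power3_eq_cube algebra_simps)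
  have "(cmod (g z))^2 = Re (g z)^2 + Im (g z)^2" by (rule cmod_power2)
  then show ?thesis using assms re im by (simp add: power_mult_distrib)
qed

lemma R0:
  fixes t :: real
  assumes t: "t \<ge> 0" and E: "(1 + t)^2 + t*(7-t)^2 = 1"
  shows "t = 0"
proof -
  have "2*t + t^2 + t*(7-t)^2 = 0" using E by (simp add: power2_eq_square algebra_simps)
  moreover have "t^2 \<ge> 0" "t*(7-t)^2 \<ge> 0" using t by simp_all
  ultimately show ?thesis using t by linarith
qed

theorem lemma3p6:
  shows "Re ` A \<subseteq> {-0.275..0} \<and> Re ` B \<subseteq> {0.495..0.64} \<and>
         {z \<in> A. Re z = 0} = {0}"
proof (intro conjI)
  show "Re ` A \<subseteq> {-0.275..0}"
  proof
    fix r assume "r \<in> Re ` A"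
    then obtain z where z: "z \<in> A" "r = Re z" by auto
    then have h: "Re z \<le> 0" "cmod (g z) = 1" unfolding A_def by auto
    have "\<not> Re z < -11/40"
      using R1[OF zero_le_power2 _ g_eq[OF h(2)]] by blast
    then show "r \<in> {-0.275..0}" using z h by simp
  qed
  show "Re ` B \<subseteq> {0.495..0.64}"
  proof
    fix r assume "r \<in> Re ` B"
    then obtain z where z: "z \<in> B" "r = Re z" by auto
    then have h: "Re z > 0" "cmod (g z) = 1" unfolding B_def by auto
    have "\<not> Re z < 99/200"
      using R2[OF zero_le_power2 h(1) _ g_eq[OF h(2)]] by blast
    moreover have "\<not> Re z > 16/25"
      using R3[OF zero_le_power2 _ g_eq[OF h(2)]] by blast
    ultimately show "r \<in> {0.495..0.64}" using z by simp
  qed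
  show "{z \<in> A. Re z = 0} = {0}"
  proof
    show "{z \<in> A. Re z = 0} \<subseteq> {0}"
    proof
      fix z assume "z \<in> {z \<in> A. Re z = 0}"
      then have h: "Re z = 0" "cmod (g z) = 1" unfolding A_def by auto
      have "(Im z)^2 = 0" using R0[of "(Im z)^2"] g_eq[OF h(2)] h(1) by simp
      then show "z \<in> {0}" using h(1) by (simp add: complex_eq_iff)
    qed
    show "{0} \<subseteq> {z \<in> A. Re z = 0}" unfolding A_def g_def by simp
  qed
qed
end
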